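(* Let $\phi_*\in(0,\pi/2)$, $\delta_*=\min\{\phi_*,\tfrac\pi2-\phi_*\}$, and $R\ge\max\{\frac{34r}{\phi_*},\frac{14.6r}{\delta_*\sin\phi_*}\}$. For the billiard map on $Q(\phi_*,R)$ and any $x\in M_r$ for which $x_0,x_1,x_2$ are defined, if $d_1<2r$ then $x_0\in V(\delta_* )$ and $x_2\in U(\delta_* )$.
   Context: Setting: $r=1$, $\phi_*\in(0,\pi/2)$, $Q(\phi_*,R)=D(O_r,r)\cap D(O_R,R)$ with $|O_rO_R|=\sqrt{R^2-r^2\sin^2\phi_*}-r\cos\phi_*$; boundary arcs $\Gamma_r$ (position angles $\phi\in[\phi_*,2\pi-\phi_*]$ about $O_r$, measured counterclockwise from $\overrightarrow{O_RO_r}$) and $\Gamma_R$ (angles in $(-\Phi_*,\Phi_* )$ about $O_R$, $R\sin\Phi_*=r\sin\phi_*$). Phase space $M=M_r\sqcup M_R$, coordinates $(\phi,\theta)$, $\theta\in(0,\pi)$ the angle from the positive tangent direction; $F$ the billiard map. $M_r^{in}=M_r\cap F(M_R)$, $M_r^{out}=M_r\cap F^{-1}(M_R)$, $M_R^{out}=M_R\cap F^{-1}(M_r)$. Notation for $x\in M_r$: $n_0=\inf\{n\ge0:F^nx\in M_r^{out}\}$, $x_0=(\phi_0,\theta_0)=F^{n_0}x$, $x_1=(\phi_1,\theta_1)=Fx_0\in M_R$, $n_1=\inf\{n\ge0:F^nx_1\in M_R^{out}\}$, $x_2=(\phi_2,\theta_2)=F^{n_1+1}x_1\in M_r^{in}$;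 $d_0=r\sin\theta_0$, $d_1=R\sin\theta_1$, $d_2=r\sin\theta_2$. With $x_*=(2\pi-\phi_*,\phi_* )$, $y_*=(\phi_*,\pi-\phi_* )$, $I(\phi,\theta)=(\phi,\pi-\theta)$ and Euclidean balls $B(z,\delta)$ in $(\phi,\theta)$ coordinates: $V(\delta)=(B(x_*,\delta)\cup B(y_*,\delta))\cap M_r^{out}$, $U(\delta)=(B(Ix_*,\delta)\cup B(Iy_*,\delta))\cap M_r^{in}$. *)

theory Defs
  imports "HOL-Analysis.Analysis"
begin

text \<open>Billiard in Q(phi_s,R) with r = 1. Points of the plane are complex numbers;
 O_R = 0 and O_r = ctr (a positive real), so the direction O_R -> O_r is the positive real axis.\<close>

datatype arc = ArcSmall | ArcBig

type_synonym phpt = "arc \<times> real \<times> real"  \<comment> \<open>(arc, position angle, theta)\<close>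

definition ctr :: "real \<Rightarrow> real \<Rightarrow> real" where
  "ctr ps R = sqrt (R\<^sup>2 - (sin ps)\<^sup>2) - cos ps"

definition PhiS :: "real \<Rightarrow> real \<Rightarrow> real" where
  "PhiS ps R = arcsin (sin ps / R)"

fun inM :: "real \<Rightarrow> real \<Rightarrow> phpt \<Rightarrow> bool" where
  "inM ps R (ArcSmall, phi, th) \<longleftrightarrow> ps \<le> phi \<and> phi \<le> 2*pi - ps \<and> 0 < th \<and> th < pi"
| "inM ps R (ArcBig, phi, th) \<longleftrightarrow> - PhiS ps R < phi \<and> phi < PhiS ps R \<and> 0 < th \<and> th < pi"

definition Mr :: "real \<Rightarrow> real \<Rightarrow> phpt set" where
  "Mr ps R = {x. fst x = ArcSmall \<and> inM ps R x}"

definition MR :: "real \<Rightarrow> real \<Rightarrow> phpt set" where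
  "MR ps R = {x. fst x = ArcBig \<and> inM ps R x}"

definition M :: "real \<Rightarrow> real \<Rightarrow> phpt set" where
  "M ps R = Mr ps R \<union> MR ps R"

fun pos :: "real \<Rightarrow> real \<Rightarrow> phpt \<Rightarrow> complex" where
  "pos ps R (ArcSmall, phi, th) = complex_of_real (ctr ps R) + cis phi"
| "pos ps R (ArcBig, phi, th) = complex_of_real R * cis phi"

definition tng :: "phpt \<Rightarrow> complex" where
  "tng x = \<i> * cis (fst (snd x))"

text \<open>Unit direction making angle theta with the positive tangent (towards the inside).\<close>
definition dir :: "phpt \<Rightarrow> complex" where
  "dir x = tng x * cis (snd (snd x))"

text \<open>y is the next collision of x: straight motion, then specular reflection.\<close>
definition hit :: "real \<Rightarrow> real \<Rightarrow> phpt \<Rightarrow> phpt \<Rightarrow> bool" where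
  "hit ps R x y \<longleftrightarrow> y \<in> M ps R \<and>
     (\<exists>t>0. pos ps R y = pos ps R x + complex_of_real t * dir x) \<and>
     cis (snd (snd y)) = cnj (dir x / tng y)"

definition bmap :: "real \<Rightarrow> real \<Rightarrow> phpt \<Rightarrow> phpt option" where
  "bmap ps R x = (if x \<in> M ps R \<and> (\<exists>!y. hit ps R x y) then Some (THE y. hit ps R x y) else None)"

primrec biter :: "real \<Rightarrow> real \<Rightarrow> nat \<Rightarrow> phpt \<Rightarrow> phpt option" where
  "biter ps R 0 x = Some x"
| "biter ps R (Suc n) x = Option.bind (biter ps R n x) (bmap ps R)"

definition Mr_in :: "real \<Rightarrow> real \<Rightarrow> phpt set" where
  "Mr_in ps R = {y \<in> Mr ps R. \<exists>x \<in> MR ps R. bmap ps R x = Some y}"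

definition Mr_out :: "real \<Rightarrow> real \<Rightarrow> phpt set" where
  "Mr_out ps R = {x \<in> Mr ps R. \<exists>y \<in> MR ps R. bmap ps R x = Some y}"

definition MR_out :: "real \<Rightarrow> real \<Rightarrow> phpt set" where
  "MR_out ps R = {x \<in> MR ps R. \<exists>y \<in> Mr ps R. bmap ps R x = Some y}"

definition Vset :: "real \<Rightarrow> real \<Rightarrow> real \<Rightarrow> phpt set" where
  "Vset ps R d = {x \<in> Mr_out ps R. snd x \<in> ball (2*pi - ps, ps) d \<union> ball (ps, pi - ps) d}"

definition Uset :: "real \<Rightarrow> real \<Rightarrow> real \<Rightarrow> phpt set" where
  "Uset ps R d = {x \<in> Mr_in ps R. snd x \<in> ball (2*pi - ps, pi - ps) d \<union> ball (ps, ps) d}"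

end

theory Submission
  imports Defs
begin



lemma sin_half_lower:
  fixes x :: real assumes "0 < x" "x \<le> 1" shows "x/2 < sin x"
proof -
  have "\<bar>sin x - (\<Sum>m<3. sin_coeff m * x ^ m)\<bar> \<le> inverse (fact 3) * \<bar>x\<bar> ^ 3"
    by (rule Maclaurin_sin_bound)
  moreover have "(\<Sum>m<3. sin_coeff m * x ^ m) = x"
    by (simp add: numeral_3_eq_3 sin_coeff_def)
  ultimately have "sin x \<ge> x - x^3/6" using assms by (simp add: fact_numeral abs_if split: if_splits)
  moreover have "x^3 \<le> x" using assms by (simp add: power3_eq_cube mult_le_one)
  ultimately show ?thesis using assms by linarith
qed

lemma small_angle:
  fixes t b :: real assumes "0 < b" "b \<le> 1" "0 \<le> t" "t \<le> pi/2" "sin t \<le> b/2"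
  shows "t < b"
proof (rule ccontr)
  assume "\<not> t < b"
  hence "sin b \<le> sin t" using assms pi_ge_two by (subst sin_mono_le_eq) auto
  thus False using sin_half_lower[OF assms(1,2)] assms by linarith
qed

lemma phi_bound:
  fixes ps a phi :: real
  assumes "0 < ps" "ps < pi/2" "0 < a" "a \<le> 1" "ps + a \<le> pi"
    "ps \<le> phi" "phi \<le> 2*pi - ps" "cos phi > cos ps - sin ps * (a/2)"
  shows "phi < ps + a \<or> phi > 2*pi - ps - a"
proof (rule ccontr)
  assume H: "\<not> ?thesis"
  define p where "p = (if phi \<le> pi then phi else 2*pi - phi)"
  have cp: "cos p = cos phi" unfolding p_def by (simp add: cos_diff)
  have pr: "ps + a \<le> p" "p \<le> pi" using H assms unfolding p_def by auto
  have "cos p \<le> cos (ps + a)" using pr assms by (subst cos_mono_le_eq) auto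
  also have "\<dots> = cos ps * cos a - sin ps * sin a" by (simp add: cos_add)
  also have "\<dots> \<le> cos ps - sin ps * sin a"
  proof -
    have "cos ps \<ge> 0" using assms by (simp add: cos_ge_zero)
    thus ?thesis using cos_le_one[of a] by (simp add: mult_left_le)
  qed
  also have "\<dots> < cos ps - sin ps * (a/2)"
    using sin_half_lower[OF assms(3,4)] sin_gt_zero[of ps] assms by (simp add: mult_strict_left_mono)
  finally show False using cp assms by linarith
qed




lemma helperA:
  fixes th q m :: real and j :: int
  assumes "0 < th" "th < pi" "0 < q" "q < pi" "\<bar>m\<bar> < pi" "th = q + m + 2*pi * of_int j"
  shows "j = 0"
proof (rule ccontr)
  assume "j \<noteq> 0"
  hence "j \<ge> 1 \<or> j \<le> -1" by linarith
  thus False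
  proof
    assume "j \<ge> 1" hence "2*pi * of_int j \<ge> 2*pi*1" by simp
    thus False using assms by linarith
  next
    assume "j \<le> -1" hence "of_int j \<le> (-1::real)" by simp
    hence "2*pi * of_int j \<le> 2*pi*(-1)" by (intro mult_left_mono) auto
    thus False using assms by linarith
  qed
qed

lemma helperB:
  fixes th q m :: real and j :: int
  assumes "0 < q" "q < pi" "\<bar>m\<bar> < q" "\<bar>m\<bar> < pi - q" "th = - q + m + 2*pi * of_int j"
  shows "\<not> (0 < th \<and> th < pi)"
proof
  assume h: "0 < th \<and> th < pi"
  have "j \<ge> 1 \<or> j \<le> 0" by linarith
  thus False
  proof
    assume "j \<ge> 1" hence "2*pi * of_int j \<ge> 2*pi*1" by simp
    thus False using assms h by linarith
  next
    assume "j \<le> 0" hence "2*pi * of_int j \<le> 0" by (simp add: mult_nonneg_nonpos)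
    thus False using assms h by linarith
  qed
qed

lemma ball_helper:
  fixes x y p q d :: real
  assumes "0 < d" "\<bar>x - p\<bar> \<le> 32/100*d" "\<bar>y - q\<bar> \<le> 74/100*d"
  shows "(x, y) \<in> ball (p, q) d"
proof -
  have a: "(x - p)^2 \<le> (32/100*d)^2" using assms by (metis abs_le_square_iff abs_of_nonneg less_eq_real_def mult_nonneg_nonneg zero_le_divide_iff zero_le_numeral)
  have b: "(y - q)^2 \<le> (74/100*d)^2" using assms by (metis abs_le_square_iff abs_of_nonneg less_eq_real_def mult_nonneg_nonneg zero_le_divide_iff zero_le_numeral)
  have "(x-p)^2 + (y-q)^2 < d^2" using a b assms by (simp add: power2_eq_square) (smt (verit) mult_pos_pos)
  hence "sqrt ((p-x)^2 + (q-y)^2) < d" using assms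
    by (metis power2_commute real_less_lsqrt real_sqrt_less_iff real_sqrt_pow2_iff less_eq_real_def zero_le_power2 add_nonneg_nonneg)
  thus ?thesis by (simp add: dist_Pair_Pair dist_real_def mem_ball)
qed




lemma core:
  fixes ps dl R c phi th psi th' :: real and k :: int
  assumes ps: "0 < ps" "ps < pi/2" and dl: "dl = min ps (pi/2 - ps)"
    and R: "R * (dl * sin ps) \<ge> 146/10" and c: "c \<ge> R - 2"
    and phi: "ps \<le> phi" "phi \<le> 2*pi - ps" and cphi: "cos phi > cos ps - 2/c"
    and psi: "\<bar>psi\<bar> < 2/R" and th': "0 < th'" "th' < pi" "sin th' < 2/R"
    and th: "0 < th" "th < pi" and eq: "th = psi - th' - phi + 2*pi * of_int k"
  shows "(phi, th) \<in> ball (2*pi - ps, ps) dl \<union> ball (ps, pi - ps) dl"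
proof -
  define s where "s = sin ps"
  have s0: "0 < s" using ps by (simp add: s_def sin_gt_zero)
  have s1: "s \<le> 1" by (simp add: s_def)
  have d0: "0 < dl" using dl ps by simp
  have d1: "dl \<le> ps" "dl \<le> pi/2 - ps" using dl by auto
  have d2: "dl < 1" using d1 pi_less_4 by linarith
  have ds0: "0 < dl * s" using d0 s0 by simp
  have ds1: "dl * s \<le> 1" using d2 s1 d0 s0 by (simp add: mult_le_one)
  have Rs: "R * (dl * s) \<ge> 146/10" using R s_def by simp
  have R0: "0 < R"
  proof (rule ccontr)
    assume "\<not> 0 < R" hence "R * (dl * s) \<le> 0" using ds0 by (simp add: mult_nonpos_nonneg)
    thus False using Rs by linarith
  qed
  have "R * (dl * s) \<le> R" using R0 ds1 by (simp add: mult_left_le)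
  hence R1: "R \<ge> 146/10" using Rs by linarith
  have "R * (dl * s) \<le> R * dl" using R0 d0 s1 by (simp add: mult_left_le)
  hence RD: "R * dl \<ge> 146/10" using Rs by linarith
  have c0: "0 < c" using c R1 by linarith
  define a where "a = 4 / (c * s)"
  have a0: "0 < a" using c0 s0 a_def by simp
  have "dl * c * s \<ge> dl * (R - 2) * s" using c d0 s0 by (simp add: mult_right_mono)
  also have "dl * (R - 2) * s = R * (dl * s) - 2 * (dl * s)" by (simp add: algebra_simps)
  finally have "dl * c * s \<ge> 126/10" using Rs ds1 by linarith
  hence a1: "a \<le> 32/100 * dl" using c0 s0 d0 unfolding a_def
    by (simp add: divide_le_eq algebra_simps)
  have a2: "a \<le> 1" "ps + a \<le> pi" using a1 d1 d2 d0 by linarith+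
  have sa: "sin ps * (a/2) = 2/c" using s0 c0 unfolding a_def s_def by (simp add: field_simps)
  have ph: "phi < ps + a \<or> phi > 2*pi - ps - a"
    using phi_bound[OF ps a0 a2 phi] cphi sa by simp
  have R2: "2/R \<le> 14/100 * dl" using RD R0 d0 by (simp add: divide_le_eq algebra_simps)
  have R4: "4/R \<le> 28/100 * dl" using RD R0 d0 by (simp add: divide_le_eq algebra_simps)
  have b1: "4/R \<le> 1" using R1 R0 by (simp add: divide_le_eq)
  have b0: "0 < 4/R" using R0 by simp
  have e: "th' < 4/R \<or> pi - th' < 4/R"
  proof (cases "th' \<le> pi/2")
    case True thus ?thesis using small_angle[OF b0 b1, of th'] th' by simp
  next
    case False
    have "sin (pi - th') = sin th'" by simp
    thus ?thesis using small_angle[OF b0 b1, of "pi - th'"] th' False by simp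
  qed
  have psi2: "\<bar>psi\<bar> \<le> 14/100*dl" using psi R2 by linarith
  have e2: "th' \<le> 28/100*dl \<or> pi - th' \<le> 28/100*dl" using e R4 by linarith
  from ph show ?thesis
  proof
    assume p1: "phi < ps + a"
    from e2 show ?thesis
    proof
      assume e1: "th' \<le> 28/100*dl"
      have "\<not> (0 < th \<and> th < pi)"
        by (rule helperB[of ps "psi - th' - (phi - ps)" th k]) (use eq ps p1 e1 th' phi psi2 a1 d1 in auto)
      thus ?thesis using th by simp
    next
      assume e1: "pi - th' \<le> 28/100*dl"
      have "k - 1 = 0"
        by (rule helperA[of th "pi - ps" "psi + (pi - th') - (phi - ps)"]) (use eq ps p1 e1 th' phi psi2 a1 d1 th in \<open>auto simp: algebra_simps\<close>)
      hence "th = (pi - ps) + (psi + (pi - th') - (phi - ps))" using eq by simp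
      hence "\<bar>phi - ps\<bar> \<le> 32/100*dl" "\<bar>th - (pi - ps)\<bar> \<le> 74/100*dl"
        unfolding abs_le_iff using d0 p1 phi a1 e1 psi2[unfolded abs_le_iff] th' by linarith+
      hence "(phi, th) \<in> ball (ps, pi - ps) dl" using d0 by (intro ball_helper)
      thus ?thesis by simp
    qed
  next
    assume p1: "phi > 2*pi - ps - a"
    from e2 show ?thesis
    proof
      assume e1: "th' \<le> 28/100*dl"
      have "k - 1 = 0"
        by (rule helperA[of th "ps" "psi - th' + (2*pi - ps - phi)"]) (use eq ps p1 e1 th' phi psi2 a1 d1 th in \<open>auto simp: algebra_simps\<close>)
      hence "th = ps + (psi - th' + (2*pi - ps - phi))" using eq by simp
      hence "\<bar>phi - (2*pi - ps)\<bar> \<le> 32/100*dl" "\<bar>th - ps\<bar> \<le> 74/100*dl"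
        unfolding abs_le_iff using d0 p1 phi a1 e1 psi2[unfolded abs_le_iff] th' by linarith+
      hence "(phi, th) \<in> ball (2*pi - ps, ps) dl" using d0 by (intro ball_helper)
      thus ?thesis by simp
    next
      assume e1: "pi - th' \<le> 28/100*dl"
      have "\<not> (0 < th \<and> th < pi)"
        by (rule helperB[of "pi - ps" "psi + (pi - th') + (2*pi - ps - phi)" th "k - 1"]) (use eq ps p1 e1 th' phi psi2 a1 d1 in \<open>auto simp: algebra_simps\<close>)
      thus ?thesis using th by simp
    qed
  qed
qed




lemma cis_eqk: assumes "cis a = cis b" shows "\<exists>k::int. a = b + 2*pi * of_int k"
proof -
  have "cos a = cos b" "sin a = sin b" using arg_cong[OF assms, of Re] arg_cong[OF assms, of Im] by simp_all
  thus ?thesis using sin_cos_eq_iff by blast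
qed

lemma bmap_hit: assumes "bmap ps R x = Some y" shows "hit ps R x y"
proof -
  have "\<exists>!y. hit ps R x y" and "y = (THE y. hit ps R x y)"
    using assms unfolding bmap_def by (auto split: if_splits)
  thus ?thesis using theI' by metis
qed

lemma G1:
  assumes "hit ps R (ArcSmall, p0, t0) (ArcBig, p1, t1)"
  shows "(\<exists>k::int. t0 = p1 - t1 - p0 + 2*pi * of_int k) \<and>
     (ctr ps R)^2 + 2 * ctr ps R * cos p0 + 1 \<ge> R^2 - (R * sin t1)^2"
proof -
  define c where "c = ctr ps R"
  obtain t where t: "t > 0" and eq: "complex_of_real R * cis p1 = complex_of_real c + cis p0 + complex_of_real t * (\<i> * cis p0 * cis t0)"
    using assms unfolding hit_def dir_def tng_def c_def by auto
  have r: "cis t1 = cnj (\<i> * cis p0 * cis t0 / (\<i> * cis p1))"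
    using assms unfolding hit_def dir_def tng_def by auto
  also have "\<dots> = cis (p1 - p0 - t0)" by (simp add: cis_mult cis_divide cis_cnj diff_diff_eq)
  finally obtain k :: int where k: "t1 = p1 - p0 - t0 + 2*pi * of_int k" using cis_eqk by blast
  have A: "\<exists>k::int. t0 = p1 - t1 - p0 + 2*pi * of_int k"
    by (rule exI[of _ k]) (simp add: k)
  define u where "u = p0 + t0"
  have cu: "cos u = cos (p1 - t1)" "sin u = sin (p1 - t1)"
  proof -
    have "p1 - t1 = u + 2*pi * of_int (-k)" using k u_def by simp
    hence "sin (p1 - t1) = sin u \<and> cos (p1 - t1) = cos u" by (subst sin_cos_eq_iff) blast
    thus "cos u = cos (p1 - t1)" "sin u = sin (p1 - t1)" by simp_all
  qed
  have X: "R * cos p1 = c + cos p0 - t * sin u" and Y: "R * sin p1 = sin p0 + t * cos u"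
    using arg_cong[OF eq, of Re] arg_cong[OF eq, of Im]
    by (simp_all add: cis_mult u_def algebra_simps)
  have "cos p1 * sin u - sin p1 * cos u = sin ((p1 - t1) - p1)"
    unfolding sin_diff[of "p1 - t1" p1] cu by (simp add: algebra_simps)
  hence cross: "cos p1 * sin u - sin p1 * cos u = - sin t1" by simp
  have "c^2 + 2*c*cos p0 + 1 = (c + cos p0)^2 + (sin p0)^2"
    by (simp add: power2_eq_square algebra_simps)
  also have "\<dots> = (R * cos p1 + t * sin u)^2 + (R * sin p1 - t * cos u)^2"
    using X Y by (simp add: algebra_simps)
  also have "\<dots> = R^2 * ((cos p1)^2 + (sin p1)^2) + t^2 * ((sin u)^2 + (cos u)^2) + 2*R*t * (cos p1 * sin u - sin p1 * cos u)"
    by algebra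
  also have "\<dots> = R^2 + t^2 - 2*R*t * sin t1" using cross sin_cos_squared_add[of u] sin_cos_squared_add2[of p1] by (simp only:)
  also have "\<dots> = R^2 - (R * sin t1)^2 + (t - R * sin t1)^2" by (simp add: power2_eq_square algebra_simps)
  finally have "c^2 + 2*c*cos p0 + 1 \<ge> R^2 - (R * sin t1)^2" by simp
  thus ?thesis using A c_def by simp
qed

lemma G2:
  assumes "hit ps R (ArcBig, p, t) (ArcBig, p', t')"
  shows "R * cos t' = R * cos t"
proof -
  obtain s where eq: "complex_of_real R * cis p' = complex_of_real R * cis p + complex_of_real s * (\<i> * cis p * cis t)"
    using assms unfolding hit_def dir_def tng_def by auto
  have r: "cis t' = cnj (\<i> * cis p * cis t / (\<i> * cis p'))"
    using assms unfolding hit_def dir_def tng_def by auto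
  also have "\<dots> = cis (p' - p - t)" by (simp add: cis_mult cis_divide cis_cnj diff_diff_eq)
  finally obtain k :: int where k: "t' = p' - p - t + 2*pi * of_int k" using cis_eqk by blast
  define u where "u = p + t"
  have cu: "cos u = cos (p' - t')" "sin u = sin (p' - t')"
  proof -
    have "p' - t' = u + 2*pi * of_int (-k)" using k u_def by simp
    hence "sin (p' - t') = sin u \<and> cos (p' - t') = cos u" by (subst sin_cos_eq_iff) blast
    thus "cos u = cos (p' - t')" "sin u = sin (p' - t')" by simp_all
  qed
  have X: "R * cos p' = R * cos p - s * sin u" and Y: "R * sin p' = R * sin p + s * cos u"
    using arg_cong[OF eq, of Re] arg_cong[OF eq, of Im]
    by (simp_all add: cis_mult u_def algebra_simps)
  have "R * cos t' = R * (cos p' * cos (p' - t') + sin p' * sin (p' - t'))"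
    using cos_diff[of p' "p' - t'"] by simp
  also have "\<dots> = (R * cos p') * cos u + (R * sin p') * sin u" using cu by (simp add: algebra_simps)
  also have "\<dots> = R * (cos p * cos u + sin p * sin u)" unfolding X Y by (simp add: algebra_simps)
  also have "\<dots> = R * cos (u - p)" by (simp add: cos_diff)
  finally show ?thesis by (simp add: u_def)
qed

lemma G3:
  assumes "hit ps R (ArcBig, pz, tz) (ArcSmall, p2, t2)"
  shows "(\<exists>k::int. t2 = p2 - pz - tz + 2*pi * of_int k) \<and>
     (ctr ps R)^2 + 2 * ctr ps R * cos p2 + 1 \<ge> R^2 - (R * sin tz)^2"
proof -
  define c where "c = ctr ps R"
  obtain t where eq: "complex_of_real c + cis p2 = complex_of_real R * cis pz + complex_of_real t * (\<i> * cis pz * cis tz)"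
    using assms unfolding hit_def dir_def tng_def c_def by auto
  have r: "cis t2 = cnj (\<i> * cis pz * cis tz / (\<i> * cis p2))"
    using assms unfolding hit_def dir_def tng_def by auto
  also have "\<dots> = cis (p2 - pz - tz)" by (simp add: cis_mult cis_divide cis_cnj diff_diff_eq)
  finally have A: "\<exists>k::int. t2 = p2 - pz - tz + 2*pi * of_int k" using cis_eqk by blast
  define u where "u = pz + tz"
  have X: "c + cos p2 = R * cos pz - t * sin u" and Y: "sin p2 = R * sin pz + t * cos u"
    using arg_cong[OF eq, of Re] arg_cong[OF eq, of Im]
    by (simp_all add: cis_mult u_def algebra_simps)
  have "- cos pz * sin u + sin pz * cos u = - sin (u - pz)" by (simp add: sin_diff algebra_simps)
  hence cross: "- cos pz * sin u + sin pz * cos u = - sin tz" by (simp add: u_def)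
  have "c^2 + 2*c*cos p2 + 1 = (c + cos p2)^2 + (sin p2)^2"
    by (simp add: power2_eq_square algebra_simps)
  also have "\<dots> = (R * cos pz - t * sin u)^2 + (R * sin pz + t * cos u)^2"
    by (simp only: X Y)
  also have "\<dots> = R^2 * ((cos pz)^2 + (sin pz)^2) + t^2 * ((sin u)^2 + (cos u)^2) + 2*R*t * (- cos pz * sin u + sin pz * cos u)"
    by algebra
  also have "\<dots> = R^2 + t^2 - 2*R*t * sin tz" using cross sin_cos_squared_add[of u] sin_cos_squared_add2[of pz] by (simp only:)
  also have "\<dots> = R^2 - (R * sin tz)^2 + (t - R * sin tz)^2" by (simp add: power2_eq_square algebra_simps)
  finally have "c^2 + 2*c*cos p2 + 1 \<ge> R^2 - (R * sin tz)^2" by simp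
  thus ?thesis using A c_def by simp
qed




lemma refl_ball:
  fixes x y p q d :: real
  assumes "(2*pi - x, y) \<in> ball (p, q) d" shows "(x, y) \<in> ball (2*pi - p, q) d"
proof -
  have "\<bar>p - (2*pi - x)\<bar> = \<bar>(2*pi - p) - x\<bar>" by linarith
  thus ?thesis using assms by (simp add: mem_ball dist_Pair_Pair dist_real_def)
qed

lemma biter_None: "biter ps R m x = None \<Longrightarrow> biter ps R (m + j) x = None"
  by (induction j) auto

lemma sin_eq_of_cos_eq:
  fixes a b :: real
  assumes "0 < a" "a < pi" "0 < b" "b < pi" "cos a = cos b" shows "sin a = sin b"
proof -
  have "(sin a)^2 = (sin b)^2" using assms(5) by (simp add: sin_squared_eq)
  moreover have "sin a \<ge> 0" "sin b \<ge> 0" using assms by (simp_all add: sin_ge_zero)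
  ultimately show ?thesis using power2_eq_imp_eq by blast
qed

lemma along:
  assumes R0: "0 < R" and x1: "x1 \<in> MR ps R"
    and n1: "n1 = (LEAST n. biter ps R n x1 \<in> Some ` MR_out ps R)"
    and x2: "biter ps R (Suc n1) x1 = Some x2"
  shows "k \<le> n1 \<Longrightarrow> \<exists>w. biter ps R k x1 = Some w \<and> w \<in> MR ps R \<and> sin (snd (snd w)) = sin (snd (snd x1))"
proof (induction k)
  case 0 thus ?case using x1 by simp
next
  case (Suc k)
  then obtain w where w: "biter ps R k x1 = Some w" "w \<in> MR ps R" "sin (snd (snd w)) = sin (snd (snd x1))"
    by auto
  have "k < n1" using Suc by simp
  hence nw: "biter ps R k x1 \<notin> Some ` MR_out ps R" unfolding n1 by (rule not_less_Least)
  show ?case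
  proof (cases "bmap ps R w")
    case None
    hence "biter ps R (Suc k) x1 = None" using w by simp
    hence "biter ps R (Suc k + (n1 - k)) x1 = None" by (rule biter_None)
    moreover have "Suc k + (n1 - k) = Suc n1" using \<open>k < n1\<close> by simp
    ultimately show ?thesis using x2 by simp
  next
    case (Some w')
    have h: "hit ps R w w'" using Some by (rule bmap_hit)
    hence "w' \<in> M ps R" unfolding hit_def by simp
    moreover have "w' \<notin> Mr ps R"
    proof
      assume "w' \<in> Mr ps R"
      hence "w \<in> MR_out ps R" using w Some unfolding MR_out_def by auto
      thus False using nw w by simp
    qed
    ultimately have w'R: "w' \<in> MR ps R" unfolding M_def by simp
    obtain a p t where wd: "w = (a, p, t)" by (cases w)
    obtain a' p' t' where wd': "w' = (a', p', t')" by (cases w')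
    have aa: "a = ArcBig" "0 < t" "t < pi" using w(2) wd unfolding MR_def by auto
    have aa': "a' = ArcBig" "0 < t'" "t' < pi" using w'R wd' unfolding MR_def by auto
    have "R * cos t' = R * cos t" using G2[of ps R p t p' t'] h wd wd' aa aa' by simp
    hence "cos t' = cos t" using R0 by simp
    hence "sin t' = sin t" using aa aa' sin_eq_of_cos_eq by blast
    thus ?thesis using w Some wd wd' w'R by simp
  qed
qed

theorem mainTheorem3:
  fixes ps R :: real and x x0 x1 x2 :: phpt and n0 n1 :: nat
  assumes "0 < ps" and "ps < pi / 2"
    and "R \<ge> max (34 / ps) ((146 / 10) / (min ps (pi / 2 - ps) * sin ps))"
    and "x \<in> Mr ps R"
    and "\<exists>n. biter ps R n x \<in> Some ` Mr_out ps R"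
    and "n0 = (LEAST n. biter ps R n x \<in> Some ` Mr_out ps R)"
    and "biter ps R n0 x = Some x0"
    and "bmap ps R x0 = Some x1"
    and "\<exists>n. biter ps R n x1 \<in> Some ` MR_out ps R"
    and "n1 = (LEAST n. biter ps R n x1 \<in> Some ` MR_out ps R)"
    and "biter ps R (Suc n1) x1 = Some x2"
    and "R * sin (snd (snd x1)) < 2"
  shows "x0 \<in> Vset ps R (min ps (pi / 2 - ps)) \<and> x2 \<in> Uset ps R (min ps (pi / 2 - ps))"
proof -
  note ps = assms(1,2)
  define dl where "dl = min ps (pi / 2 - ps)"
  define s where "s = sin ps"
  define c where "c = ctr ps R"
  have s0: "0 < s" "s \<le> 1" using ps by (simp_all add: s_def sin_gt_zero)
  have d0: "0 < dl" using ps dl_def by simp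
  have ds0: "0 < dl * s" using s0 d0 by simp
  have "34 / ps > 17" using ps pi_half_less_two by (simp add: less_divide_eq)
  hence R17: "R \<ge> 17" using assms(3) by linarith
  have R0: "0 < R" using R17 by simp
  have "R \<ge> (146/10) / (dl * s)" using assms(3) dl_def s_def by simp
  hence RD: "R * (dl * sin ps) \<ge> 146/10" using ds0 s_def by (simp add: pos_divide_le_eq)
  have RR: "R^2 - s^2 \<ge> 0" using R17 s0 by (smt (verit) power_mono)
  have "(R - 1)^2 \<le> R^2 - s^2"
  proof -
    have "s^2 \<le> 1" using s0 by (simp add: power_le_one)
    thus ?thesis using R17 by (simp add: power2_eq_square algebra_simps)
  qed
  hence "R - 1 \<le> sqrt (R^2 - s^2)" by (rule real_le_rsqrt)
  hence cR: "c \<ge> R - 2" unfolding c_def ctr_def s_def using cos_le_one[of ps] by linarith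
  have c0: "0 < c" using cR R17 by linarith
  have Req: "R^2 = c^2 + 2*c*cos ps + 1"
  proof -
    have "(c + cos ps)^2 = R^2 - s^2" unfolding c_def ctr_def s_def using RR s_def by simp
    hence e: "c*c + (cos ps*cos ps + (sin ps * sin ps + c*(cos ps*2))) = R*R"
      unfolding s_def by (simp add: power2_eq_square algebra_simps)
    have "cos ps * cos ps + sin ps * sin ps = 1" by (rule sin_cos_squared_add3)
    thus ?thesis using e by (simp only: power2_eq_square)
  qed
  have cosb: "cos p > cos ps - 2/c" if h: "c^2 + 2*c*cos p + 1 \<ge> R^2 - (R * sin t)^2" and t: "0 < t" "t < pi" "R * sin t < 2" for p t
  proof -
    have "R * sin t > 0" using R0 t sin_gt_zero by simp
    hence "(R * sin t)^2 < 2^2" using t by (intro power_strict_mono) auto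
    hence "2*c*(cos p - cos ps) > -4" using h Req by (simp add: algebra_simps)
    hence "c * (cos p - cos ps) > -2" by simp
    hence "(-2) / c < cos p - cos ps" by (subst pos_divide_less_eq[OF c0]) (simp add: mult.commute)
    thus ?thesis by simp
  qed
  have Phi: "PhiS ps R < 2/R"
  proof -
    have sr: "0 \<le> s / R" "s / R \<le> 1" using s0 R17 by (simp_all add: divide_le_eq)
    have b0: "0 < 2 * s / R" "2 * s / R \<le> 1" using s0 R17 by (simp_all add: divide_le_eq)
    have "PhiS ps R < 2 * s / R"
      unfolding PhiS_def s_def[symmetric]
      by (rule small_angle[OF b0]) (use sr arcsin_nonneg[of "s/R"] arcsin_bounded[of "s/R"] in auto)
    also have "\<dots> \<le> 2/R" using s0 R0 by (simp add: divide_right_mono)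
    finally show ?thesis .
  qed
  have sinb: "sin t < 2/R" if "R * sin t < 2" for t using that R0 by (simp add: less_divide_eq mult.commute)
  have "biter ps R n0 x \<in> Some ` Mr_out ps R" unfolding assms(6) using assms(5) by (rule LeastI_ex)
  hence x0o: "x0 \<in> Mr_out ps R" using assms(7) by auto
  then obtain y where "y \<in> MR ps R" "bmap ps R x0 = Some y" unfolding Mr_out_def by auto
  hence x1R: "x1 \<in> MR ps R" using assms(8) by simp
  obtain a0 p0 t0 where x0d: "x0 = (a0, p0, t0)" by (cases x0)
  obtain a1 p1 t1 where x1d: "x1 = (a1, p1, t1)" by (cases x1)
  have i0: "a0 = ArcSmall" "ps \<le> p0" "p0 \<le> 2*pi - ps" "0 < t0" "t0 < pi"
    using x0o x0d unfolding Mr_out_def Mr_def by auto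
  have i1: "a1 = ArcBig" "- PhiS ps R < p1" "p1 < PhiS ps R" "0 < t1" "t1 < pi"
    using x1R x1d unfolding MR_def by auto
  have h1: "hit ps R (ArcSmall, p0, t0) (ArcBig, p1, t1)"
    using bmap_hit[OF assms(8)] x0d x1d i0 i1 by simp
  from G1[OF h1] obtain k where k: "t0 = p1 - t1 - p0 + 2*pi * of_int k"
    and ineq1: "c^2 + 2*c*cos p0 + 1 \<ge> R^2 - (R * sin t1)^2" unfolding c_def by blast
  have d1: "R * sin t1 < 2" using assms(12) x1d by simp
  have V: "(p0, t0) \<in> ball (2*pi - ps, ps) dl \<union> ball (ps, pi - ps) dl"
    by (rule core[OF ps dl_def RD cR i0(2,3) cosb[OF ineq1 i1(4,5) d1]])
       (use Phi i1 sinb[OF d1] i0 k in auto)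
  have part1: "x0 \<in> Vset ps R dl" using V x0o x0d unfolding Vset_def by simp
  obtain z where z: "biter ps R n1 x1 = Some z" "z \<in> MR ps R" "sin (snd (snd z)) = sin (snd (snd x1))"
    using along[OF R0 x1R assms(10,11), of n1] by auto
  have "biter ps R n1 x1 \<in> Some ` MR_out ps R" unfolding assms(10) using assms(9) by (rule LeastI_ex)
  hence zo: "z \<in> MR_out ps R" using z by auto
  have bz: "bmap ps R z = Some x2" using assms(11) z by simp
  hence x2r: "x2 \<in> Mr ps R" using zo unfolding MR_out_def by auto
  have x2i: "x2 \<in> Mr_in ps R" unfolding Mr_in_def using x2r z(2) bz by auto
  obtain az pz tz where zd: "z = (az, pz, tz)" by (cases z)
  obtain a2 p2 t2 where x2d: "x2 = (a2, p2, t2)" by (cases x2)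
  have iz: "az = ArcBig" "- PhiS ps R < pz" "pz < PhiS ps R" "0 < tz" "tz < pi"
    using z(2) zd unfolding MR_def by auto
  have i2: "a2 = ArcSmall" "ps \<le> p2" "p2 \<le> 2*pi - ps" "0 < t2" "t2 < pi"
    using x2r x2d unfolding Mr_def by auto
  have h2: "hit ps R (ArcBig, pz, tz) (ArcSmall, p2, t2)"
    using bmap_hit[OF bz] zd x2d iz i2 by simp
  from G3[OF h2] obtain k2 where k2: "t2 = p2 - pz - tz + 2*pi * of_int k2"
    and ineq2: "c^2 + 2*c*cos p2 + 1 \<ge> R^2 - (R * sin tz)^2" unfolding c_def by blast
  have dz: "R * sin tz < 2" using d1 z(3) zd x1d by simp
  have cb2: "cos (2*pi - p2) > cos ps - 2/c" using cosb[OF ineq2 iz(4,5) dz] by simp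
  have "(2*pi - p2, t2) \<in> ball (2*pi - ps, ps) dl \<union> ball (ps, pi - ps) dl"
    by (rule core[OF ps dl_def RD cR _ _ cb2, of "- pz" tz t2 "k2 + 1"])
       (use Phi iz sinb[OF dz] i2 k2 in \<open>auto simp: algebra_simps\<close>)
  hence U: "(p2, t2) \<in> ball (2*pi - ps, pi - ps) dl \<union> ball (ps, ps) dl"
    using refl_ball[of p2 t2 "2*pi - ps" ps dl] refl_ball[of p2 t2 ps "pi - ps" dl] by auto
  have part2: "x2 \<in> Uset ps R dl" using U x2i x2d unfolding Uset_def by simp
  show ?thesis using part1 part2 dl_def by simp
qed


end
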